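(* Let $f\in C^1(\mathbb{R}^N)$ have a gradient satisfying $\|\nabla f(x)-\nabla f(y)\|\le c\|x-y\|$ for all $x,y$. Suppose the set $S=\{x:\nabla f(x)=0\}$ is bounded and has only finitely many connected components $S_1,\dots,S_m$, that $f$ takes a constant value $f_i$ on each $S_i$, and that there exists $\epsilon_1'>0$ such that for every $i=1,\dots,m$ and every $x$ with $0<d(x,S_i)<\epsilon_1'$ we have $f(x)\neq f_i$. Then there exists $\epsilon_0'>0$ such that for every $i=1,\dots,m$ and every $x$ with $d(x,S_i)<\epsilon_0'$, $$\|\nabla f(x)\|^2\le 2c\,|f(x)-f_i|.$$
   Context: $d(x,A)=\inf\{\|x-y\|:y\in A\}$, with $\|\cdot\|$ the Euclidean norm. *)

theory Defs
  imports "HOL-Analysis.Analysis"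
begin

end

theory Submission imports Defs "HOL-Analysis.Analysis" begin

lemma taylor_lb:
  fixes f :: "'a::euclidean_space \<Rightarrow> real" and g :: "'a \<Rightarrow> 'a"
  assumes deriv: "\<And>x. (f has_derivative (\<lambda>h. g x \<bullet> h)) (at x)"
    and lip: "\<And>x y. norm (g x - g y) \<le> c * norm (x - y)"
    and v: "norm v = 1" and t: "0 \<le> t"
  shows "f x + (g x \<bullet> v) * t - c * t^2/2 \<le> f (x + t *\<^sub>R v)"
proof -
  define \<psi> where "\<psi> s = f (x + s *\<^sub>R v) - f x - (g x \<bullet> v) * s + c * s^2/2" for s
  have d: "(\<psi> has_real_derivative (g (x + s *\<^sub>R v) \<bullet> v - g x \<bullet> v + c * s)) (at s)" for s
  proof -
    have l: "((\<lambda>s. x + s *\<^sub>R v) has_derivative (\<lambda>h. h *\<^sub>R v)) (at s)"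
      by (auto intro!: derivative_eq_intros)
    have "((\<lambda>s. f (x + s *\<^sub>R v)) has_derivative (\<lambda>h. g (x + s *\<^sub>R v) \<bullet> (h *\<^sub>R v))) (at s)"
      using has_derivative_compose[OF l deriv] by simp
    then have "((\<lambda>s. f (x + s *\<^sub>R v)) has_real_derivative (g (x + s *\<^sub>R v) \<bullet> v)) (at s)"
      by (simp add: has_field_derivative_def mult.commute[of _ "g (x + s *\<^sub>R v) \<bullet> v"])
    then show ?thesis unfolding \<psi>_def
      by (auto intro!: derivative_eq_intros)
  qed
  have nn: "0 \<le> g (x + s *\<^sub>R v) \<bullet> v - g x \<bullet> v + c * s" if "0 \<le> s" for s
  proof -
    have "\<bar>(g (x + s *\<^sub>R v) - g x) \<bullet> v\<bar> \<le> norm (g (x + s *\<^sub>R v) - g x) * norm v"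
      by (rule Cauchy_Schwarz_ineq2)
    also have "\<dots> \<le> c * norm (s *\<^sub>R v)" using lip[of "x + s *\<^sub>R v" x] v by simp
    also have "\<dots> = c * s" using v that by simp
    finally show ?thesis by (simp add: inner_diff_left)
  qed
  have "\<psi> 0 \<le> \<psi> t"
    apply (rule DERIV_nonneg_imp_increasing_open[OF t])
    using d nn apply force
    using d by (meson DERIV_continuous continuous_at_imp_continuous_on)
  then show ?thesis unfolding \<psi>_def by simp
qed

lemma taylor_ub:
  fixes f :: "'a::euclidean_space \<Rightarrow> real" and g :: "'a \<Rightarrow> 'a"
  assumes deriv: "\<And>x. (f has_derivative (\<lambda>h. g x \<bullet> h)) (at x)"
    and lip: "\<And>x y. norm (g x - g y) \<le> c * norm (x - y)"
    and v: "norm v = 1" and t: "0 \<le> t"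
  shows "f (x + t *\<^sub>R v) \<le> f x + (g x \<bullet> v) * t + c * t^2/2"
proof -
  have d: "((\<lambda>x. - f x) has_derivative (\<lambda>h. (- g x) \<bullet> h)) (at x)" for x
    using has_derivative_minus[OF deriv[of x]] by simp
  have l: "norm ((- g x) - (- g y)) \<le> c * norm (x - y)" for x y
    using lip[of x y] by (simp add: norm_minus_commute)
  show ?thesis using taylor_lb[of "\<lambda>x. - f x" "\<lambda>x. - g x" c v t x, OF d l v t] by simp
qed

theorem lemma4:
  fixes f :: "'a::euclidean_space \<Rightarrow> real"
    and g :: "'a \<Rightarrow> 'a"
    and c :: real
    and fv :: "'a set \<Rightarrow> real"
  assumes deriv: "\<And>x. (f has_derivative (\<lambda>h. g x \<bullet> h)) (at x)"
    and cont: "continuous_on UNIV g"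
    and lip: "\<And>x y. norm (g x - g y) \<le> c * norm (x - y)"
    and bnd: "bounded {x. g x = 0}"
    and fin: "finite (components {x. g x = 0})"
    and const: "\<And>C x. C \<in> components {x. g x = 0} \<Longrightarrow> x \<in> C \<Longrightarrow> f x = fv C"
    and sep: "\<exists>e1>0. \<forall>C\<in>components {x. g x = 0}. \<forall>x.
                 0 < infdist x C \<and> infdist x C < e1 \<longrightarrow> f x \<noteq> fv C"
  shows "\<exists>e0>0. \<forall>C\<in>components {x. g x = 0}. \<forall>x.
           infdist x C < e0 \<longrightarrow> (norm (g x))\<^sup>2 \<le> 2 * c * \<bar>f x - fv C\<bar>"
proof -
  obtain e1 where e1: "e1 > 0" and sep1: "\<And>C x. C\<in>components {x. g x = 0} \<Longrightarrow>
                 0 < infdist x C \<Longrightarrow> infdist x C < e1 \<Longrightarrow> f x \<noteq> fv C"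
    using sep by blast
  have c0: "c \<ge> 0"
  proof -
    obtain y :: 'a where "y \<noteq> 0" using nonzero_Basis by blast
    then have "0 < norm y" by simp
    moreover have "0 \<le> c * norm y" using lip[of y 0] norm_ge_zero[of "g y - g 0"] by (metis diff_zero order_trans)
    ultimately show ?thesis by (simp add: zero_le_mult_iff)
  qed
  have clS: "closed {x. g x = 0}"
    using cont by (simp add: closed_Collect_eq)
  have fcont: "continuous_on A f" for A
    using deriv has_derivative_continuous continuous_at_imp_continuous_on by blast
  have "\<forall>C\<in>components {x. g x = 0}. \<forall>x.
           infdist x C < e1/2 \<longrightarrow> (norm (g x))\<^sup>2 \<le> 2 * c * \<bar>f x - fv C\<bar>"
  proof (intro ballI allI impI)
    fix C x assume C: "C \<in> components {x. g x = 0}" and dx: "infdist x C < e1/2"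
    have clC: "closed C" using closed_components[OF clS C] .
    have neC: "C \<noteq> {}" using C in_components_nonempty by blast
    have CS: "C \<subseteq> {x. g x = 0}" using C in_components_subset by blast
    show "(norm (g x))\<^sup>2 \<le> 2 * c * \<bar>f x - fv C\<bar>"
    proof (cases "g x = 0")
      case True then show ?thesis using c0 by simp
    next
      case False
      define n where "n = norm (g x)"
      have n0: "n > 0" using False n_def by simp
      obtain y where y: "y \<in> C" "infdist x C = dist x y"
        using infdist_attains_inf[OF clC neC] by metis
      have "n = norm (g x - g y)" using y CS n_def by auto
      also have "\<dots> \<le> c * dist x y" using lip[of x y] by (simp add: dist_norm)
      finally have nd: "n \<le> c * infdist x C" using y by simp
      have cpos: "c > 0" using nd n0 c0 infdist_nonneg[of x C]
        by (metis less_eq_real_def mult_eq_0_iff not_le)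
      define r where "r = n / c"
      have r0: "r > 0" using n0 cpos r_def by simp
      have rd: "r \<le> infdist x C" using nd cpos r_def by (simp add: divide_le_eq mult.commute)
      define u where "u = (1 / n) *\<^sub>R g x"
      have u1: "norm u = 1" using n0 n_def u_def by simp
      have gu: "g x \<bullet> u = n" using n0 n_def u_def by (simp add: power2_norm_eq_inner[symmetric] power2_eq_square)
      have gmu: "g x \<bullet> (- u) = - n" using gu by simp
      have u1': "norm (- u) = 1" using u1 by simp
      have rr: "n * r - c * r^2/2 = n^2 / (2*c)" using cpos unfolding r_def by (simp add: field_simps power2_eq_square)
      (* key: any point z = x + t v with 0 \<le> t < r, norm v = 1 has g z \<noteq> 0 and is close to C *)
      have key: "f (x + t *\<^sub>R v) \<noteq> fv C" if v: "norm v = 1" and t: "0 \<le> t" "t < r" for t v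
      proof -
        define z where "z = x + t *\<^sub>R v"
        have "norm (g z - g x) \<le> c * t" using lip[of z x] v t z_def by simp
        also have "\<dots> < n" using t cpos r_def by (simp add: field_simps)
        finally have "g z \<noteq> 0" using n_def by auto
        then have "z \<notin> C" using CS by auto
        then have pos: "0 < infdist z C" using clC neC in_closed_iff_infdist_zero infdist_nonneg
          by (metis less_eq_real_def)
        have "infdist z C \<le> infdist x C + dist z x" by (rule infdist_triangle)
        also have "dist z x = t" using z_def v t by (simp add: dist_norm)
        finally have "infdist z C < e1" using dx rd t by linarith
        then show ?thesis using sep1[OF C pos] z_def by simp
      qed
      show ?thesis
      proof (rule ccontr)
        assume "\<not> ?thesis"
        then have lt: "2 * c * \<bar>f x - fv C\<bar> < n^2" using n_def by simp
        then have lt': "\<bar>f x - fv C\<bar> < n^2 / (2*c)" using cpos by (simp add: field_simps)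
        show False
        proof (cases "fv C \<le> f x")
          case True
          have "f (x + r *\<^sub>R (- u)) \<le> f x + (g x \<bullet> (- u)) * r + c * r^2/2"
            by (rule taylor_ub[OF deriv lip u1']) (use r0 in simp)
          also have "\<dots> = f x - n^2/(2*c)" using gmu rr by simp
          also have "\<dots> < fv C" using lt' True by simp
          finally have a: "f (x + r *\<^sub>R (- u)) < fv C" .
          have "\<exists>t\<ge>0. t \<le> r \<and> f (x + t *\<^sub>R (- u)) = fv C"
            apply (rule IVT2'[of "\<lambda>t. f (x + t *\<^sub>R (- u))"])
            using a True r0 apply auto[3]
            by (intro continuous_on_compose2[OF fcont[of UNIV]]) (auto intro!: continuous_intros)
          then obtain t where t: "0 \<le> t" "t \<le> r" "f (x + t *\<^sub>R (- u)) = fv C" by blast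
          then have "t < r" using a by (metis order_le_less less_irrefl)
          then show False using key[OF u1' t(1)] t(3) by simp
        next
          case False
          have "f x + (g x \<bullet> u) * r - c * r^2/2 \<le> f (x + r *\<^sub>R u)"
            by (rule taylor_lb[OF deriv lip u1]) (use r0 in simp)
          moreover have "f x + (g x \<bullet> u) * r - c * r^2/2 = f x + n^2/(2*c)" using gu rr by simp
          moreover have "fv C < f x + n^2/(2*c)" using lt' False by simp
          ultimately have a: "fv C < f (x + r *\<^sub>R u)" by linarith
          have "\<exists>t\<ge>0. t \<le> r \<and> f (x + t *\<^sub>R u) = fv C"
            apply (rule IVT'[of "\<lambda>t. f (x + t *\<^sub>R u)"])
            using a False r0 apply auto[3]
            by (intro continuous_on_compose2[OF fcont[of UNIV]]) (auto intro!: continuous_intros)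
          then obtain t where t: "0 \<le> t" "t \<le> r" "f (x + t *\<^sub>R u) = fv C" by blast
          then have "t < r" using a by (metis order_le_less less_irrefl)
          then show False using key[OF u1 t(1)] t(3) by simp
        qed
      qed
    qed
  qed
  then show ?thesis using e1 by (intro exI[of _ "e1/2"]) auto
qed

end
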